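(* For non-negative integers $m$ and $n$, \[ \overline{{ m+n \brack n }}_{q,t} = \sum_{ p \in \mathcal{D}_{m,n}} t^{d(p)} q^{wt(p)}. \]
   Context: An overpartition is a partition in which the last occurrence of each distinct part size may be overlined; its weight $|\lambda|$ is the sum of its parts. $\overline{{m+n \brack n}}_{q,t}=\sum_{\lambda} t^{\#_o(\lambda)} q^{|\lambda|}$, the sum over all overpartitions $\lambda$ with largest part at most $m$ and at most $n$ parts, $\#_o(\lambda)$ being the number of overlined parts. $\mathcal{D}_{m,n}$ is the set of lattice paths from $(0,0)$ to $(m,n)$ using steps from $(i,j)$ to $(i+1,j)$ (East), $(i,j+1)$ (North) or $(i+1,j+1)$ (North-East). The weight of a step from $(i,j)$ is $0$ for an East step, $i$ for a North step, and $i+1$ for a North-East step; $wt(p)$ is the sum of the weights of the steps of $p$, and $d(p)$ is the number of North-East steps of $p$. *)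

theory Defs
  imports Main
begin

text \<open>An overpartition is represented as the list of its parts in non-increasing
order; each part is a pair (size, overlined?). Parts are positive, and only the
last occurrence of a part size (i.e. a part followed by a strictly smaller part,
or by nothing) may be overlined.\<close>

definition overpartition :: "(nat \<times> bool) list \<Rightarrow> bool" where
  "overpartition xs \<longleftrightarrow>
     sorted_wrt (\<ge>) (map fst xs) \<and>
     (\<forall>p\<in>set xs. 0 < fst p) \<and>
     (\<forall>i<length xs. snd (xs ! i) \<longrightarrow>
         (Suc i = length xs \<or> fst (xs ! Suc i) < fst (xs ! i)))"

definition op_weight :: "(nat \<times> bool) list \<Rightarrow> nat" where
  "op_weight xs = sum_list (map fst xs)"

definition num_overlined :: "(nat \<times> bool) list \<Rightarrow> nat" where
  "num_overlined xs = length (filter snd xs)"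

definition overparts_box :: "nat \<Rightarrow> nat \<Rightarrow> (nat \<times> bool) list set" where
  "overparts_box m n = {xs. overpartition xs \<and> length xs \<le> n \<and> (\<forall>p\<in>set xs. fst p \<le> m)}"

text \<open>The overpartition analogue of the Gaussian binomial, bracket (m+n, n) with
parameters q and t.\<close>
definition over_gbinom :: "nat \<Rightarrow> nat \<Rightarrow> 'a::comm_semiring_1 \<Rightarrow> 'a \<Rightarrow> 'a" where
  "over_gbinom m n q t = (\<Sum>xs\<in>overparts_box m n. t ^ num_overlined xs * q ^ op_weight xs)"

datatype step = E | N | NE

fun wt_from :: "nat \<Rightarrow> step list \<Rightarrow> nat" where
  "wt_from i [] = 0"
| "wt_from i (E # s) = wt_from (Suc i) s"
| "wt_from i (N # s) = i + wt_from i s"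
| "wt_from i (NE # s) = Suc i + wt_from (Suc i) s"

definition wt :: "step list \<Rightarrow> nat" where
  "wt p = wt_from 0 p"

definition d :: "step list \<Rightarrow> nat" where
  "d p = count_list p NE"

definition D :: "nat \<Rightarrow> nat \<Rightarrow> step list set" where
  "D m n = {p. count_list p E + count_list p NE = m \<and> count_list p N + count_list p NE = n}"

end

theory Submission
  imports Defs
begin

lemma overpartition_Nil[simp]: "overpartition []"
  by (simp add: overpartition_def)

lemma overpartition_Cons:
  "overpartition ((a,b)#ys) \<longleftrightarrow> 0<a \<and> (\<forall>p\<in>set ys. fst p \<le> a) \<and> overpartition ys
     \<and> (b \<longrightarrow> (ys = [] \<or> fst (hd ys) < a))"
proof -
  have idx: "(\<forall>i<length ((a,b)#ys). snd (((a,b)#ys) ! i) \<longrightarrow>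
         (Suc i = length ((a,b)#ys) \<or> fst (((a,b)#ys) ! Suc i) < fst (((a,b)#ys) ! i)))
     \<longleftrightarrow> (b \<longrightarrow> (ys = [] \<or> fst (hd ys) < a)) \<and>
        (\<forall>i<length ys. snd (ys ! i) \<longrightarrow>
         (Suc i = length ys \<or> fst (ys ! Suc i) < fst (ys ! i)))" (is "?L \<longleftrightarrow> ?R")
  proof
    assume L: ?L
    have "b \<longrightarrow> (ys = [] \<or> fst (hd ys) < a)"
      using L[rule_format, of 0] by (cases ys) auto
    moreover have "\<forall>i<length ys. snd (ys ! i) \<longrightarrow>
         (Suc i = length ys \<or> fst (ys ! Suc i) < fst (ys ! i))"
      proof (intro allI impI)
        fix i assume "i < length ys" "snd (ys ! i)"
        then show "Suc i = length ys \<or> fst (ys ! Suc i) < fst (ys ! i)"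
          using L[rule_format, of "Suc i"] by simp
      qed
    ultimately show ?R by blast
  next
    assume R: ?R
    show ?L
    proof (intro allI impI)
      fix i assume i: "i < length ((a,b)#ys)" and s: "snd (((a,b)#ys) ! i)"
      show "Suc i = length ((a,b)#ys) \<or> fst (((a,b)#ys) ! Suc i) < fst (((a,b)#ys) ! i)"
      proof (cases i)
        case 0 then show ?thesis using R s by (cases ys) auto
      next
        case (Suc j) then show ?thesis using R s i by auto
      qed
    qed
  qed
  show ?thesis unfolding overpartition_def using idx by auto
qed

lemma box_0: "overparts_box 0 n = {[]}"
proof -
  have "xs = []" if "overpartition xs" "\<forall>p\<in>set xs. fst p \<le> 0" for xs :: "(nat\<times>bool) list"
    using that by (cases xs) (auto simp: overpartition_def)
  then show ?thesis by (auto simp: overparts_box_def)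
qed

lemma box_n0: "overparts_box m 0 = {[]}"
  by (auto simp: overparts_box_def)

lemma box_rec: "overparts_box (Suc m) (Suc n) = overparts_box m (Suc n)
   \<union> Cons (Suc m,False) ` overparts_box (Suc m) n \<union> Cons (Suc m,True) ` overparts_box m n"
proof (intro equalityI subsetI)
  fix xs assume xs: "xs \<in> overparts_box (Suc m) (Suc n)"
  show "xs \<in> overparts_box m (Suc n)
   \<union> Cons (Suc m,False) ` overparts_box (Suc m) n \<union> Cons (Suc m,True) ` overparts_box m n"
  proof (cases xs)
    case Nil then show ?thesis by (auto simp: overparts_box_def)
  next
    case (Cons x ys)
    obtain a b where x: "x = (a,b)" by force
    have op: "overpartition ((a,b)#ys)" and len: "length ys \<le> n" and le: "a \<le> Suc m"
      and les: "\<forall>p\<in>set ys. fst p \<le> Suc m"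
      using xs Cons x by (auto simp: overparts_box_def)
    from op have ys: "0<a" "\<forall>p\<in>set ys. fst p \<le> a" "overpartition ys"
      "b \<longrightarrow> (ys = [] \<or> fst (hd ys) < a)" by (auto simp: overpartition_Cons)
    show ?thesis
    proof (cases "a \<le> m")
      case True
      then have "xs \<in> overparts_box m (Suc n)" using xs ys Cons x
        by (fastforce simp: overparts_box_def)
      then show ?thesis by blast
    next
      case False
      then have a: "a = Suc m" using le by auto
      show ?thesis
      proof (cases b)
        case False
        then have "ys \<in> overparts_box (Suc m) n" using ys len les by (auto simp: overparts_box_def)
        then show ?thesis using Cons x a False by blast
      next
        case True
        have "\<forall>p\<in>set ys. fst p \<le> m"
        proof
          fix p assume p: "p \<in> set ys"
          then obtain z zs where yz: "ys = z # zs" by (cases ys) auto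
          have "fst z < Suc m" using ys(4) True a yz by auto
          moreover have "fst p \<le> fst z"
          proof (cases "p = z")
            case False
            then have "p \<in> set zs" using p yz by auto
            moreover have "sorted_wrt (\<ge>) (map fst ys)" using ys(3) by (simp add: overpartition_def)
            ultimately show ?thesis using yz by auto
          qed simp
          ultimately show "fst p \<le> m" by simp
        qed
        then have "ys \<in> overparts_box m n" using ys len by (auto simp: overparts_box_def)
        then show ?thesis using Cons x a True by blast
      qed
    qed
  qed
next
  fix xs assume "xs \<in> overparts_box m (Suc n)
   \<union> Cons (Suc m,False) ` overparts_box (Suc m) n \<union> Cons (Suc m,True) ` overparts_box m n"
  then show "xs \<in> overparts_box (Suc m) (Suc n)"
  proof (elim UnE imageE)
    assume "xs \<in> overparts_box m (Suc n)" then show ?thesis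
      by (auto simp: overparts_box_def)
  next
    fix ys assume "xs = (Suc m, False) # ys" "ys \<in> overparts_box (Suc m) n"
    then show ?thesis by (auto simp: overparts_box_def overpartition_Cons)
  next
    fix ys assume "xs = (Suc m, True) # ys" "ys \<in> overparts_box m n"
    then show ?thesis by (cases ys) (auto simp: overparts_box_def overpartition_Cons)
  qed
qed

lemma finite_box: "finite (overparts_box m n)"
proof -
  have "overparts_box m n \<subseteq> {xs. set xs \<subseteq> {0..m} \<times> UNIV \<and> length xs \<le> n}"
    by (auto simp: overparts_box_def)
  moreover have "finite {xs. set xs \<subseteq> {0..m} \<times> (UNIV::bool set) \<and> length xs \<le> n}"
    by (rule finite_lists_length_le) auto
  ultimately show ?thesis by (rule finite_subset)
qed

lemma og_0: "over_gbinom 0 n q t = 1"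
  by (simp add: over_gbinom_def box_0 num_overlined_def op_weight_def)

lemma og_n0: "over_gbinom m 0 q t = 1"
  by (simp add: over_gbinom_def box_n0 num_overlined_def op_weight_def)

lemma og_rec: "over_gbinom (Suc m) (Suc n) q t = over_gbinom m (Suc n) q t
   + q ^ Suc m * over_gbinom (Suc m) n q t + t * q ^ Suc m * over_gbinom m n q t"
proof -
  let ?g = "\<lambda>xs. t ^ num_overlined xs * q ^ op_weight xs"
  have d1: "overparts_box m (Suc n) \<inter> Cons (Suc m,False) ` overparts_box (Suc m) n = {}"
    by (auto simp: overparts_box_def)
  have d2: "(overparts_box m (Suc n) \<union> Cons (Suc m,False) ` overparts_box (Suc m) n)
     \<inter> Cons (Suc m,True) ` overparts_box m n = {}"
    by (auto simp: overparts_box_def)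
  have "over_gbinom (Suc m) (Suc n) q t = sum ?g (overparts_box m (Suc n))
     + sum ?g (Cons (Suc m,False) ` overparts_box (Suc m) n)
     + sum ?g (Cons (Suc m,True) ` overparts_box m n)"
    unfolding over_gbinom_def box_rec
    by (simp add: sum.union_disjoint finite_box d1 d2)
  also have "sum ?g (Cons (Suc m,False) ` overparts_box (Suc m) n)
      = q ^ Suc m * over_gbinom (Suc m) n q t"
    by (simp add: sum.reindex over_gbinom_def sum_distrib_left num_overlined_def op_weight_def
        power_add mult_ac)
  also have "sum ?g (Cons (Suc m,True) ` overparts_box m n)
      = t * q ^ Suc m * over_gbinom m n q t"
    by (simp add: sum.reindex over_gbinom_def sum_distrib_left num_overlined_def op_weight_def
        power_add mult_ac)
  finally show ?thesis by (simp add: over_gbinom_def)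
qed

lemma len_count: "length p = count_list p E + count_list p N + count_list p NE"
  proof (induction p)
  case (Cons a p) then show ?case by (cases a) auto
qed simp

lemma univ_step: "(UNIV :: step set) = {E,N,NE}"
  using step.exhaust by auto

lemma finite_D: "finite (D m n)"
proof -
  have "D m n \<subseteq> {xs. set xs \<subseteq> {E,N,NE} \<and> length xs \<le> m + n}"
    by (auto simp: D_def len_count[of x for x] univ_step[symmetric])
  moreover have "finite {xs. set xs \<subseteq> {E,N,NE} \<and> length xs \<le> m + n}"
    by (rule finite_lists_length_le) auto
  ultimately show ?thesis by (rule finite_subset)
qed

lemma wt_from_snoc: "wt_from i (p @ [x]) = wt_from i p +
   (case x of E \<Rightarrow> 0 | N \<Rightarrow> i + count_list p E + count_list p NE
     | NE \<Rightarrow> Suc (i + count_list p E + count_list p NE))"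
proof (induction p arbitrary: i)
  case Nil then show ?case by (cases x) auto
next
  case (Cons y p) then show ?case by (cases y; cases x) auto
qed

lemma rep_N: "count_list p E = 0 \<Longrightarrow> count_list p NE = 0 \<Longrightarrow> p = replicate (count_list p N) N"
proof (induction p)
  case (Cons y p) then show ?case by (cases y) auto
qed simp

lemma rep_E: "count_list p N = 0 \<Longrightarrow> count_list p NE = 0 \<Longrightarrow> p = replicate (count_list p E) E"
proof (induction p)
  case (Cons y p) then show ?case by (cases y) auto
qed simp

lemma count_rep: "count_list (replicate k x) y = (if x = y then k else 0)"
  by (induction k) auto

lemma D_0: "D 0 n = {replicate n N}"
proof (intro equalityI subsetI)
  fix p assume "p \<in> D 0 n" then show "p \<in> {replicate n N}"
    using rep_N[of p] by (auto simp: D_def)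
qed (auto simp: D_def count_rep)

lemma D_n0: "D m 0 = {replicate m E}"
proof (intro equalityI subsetI)
  fix p assume "p \<in> D m 0" then show "p \<in> {replicate m E}"
    using rep_E[of p] by (auto simp: D_def)
qed (auto simp: D_def count_rep)

lemma wt_rep_N: "wt_from i (replicate k N) = k * i"
  by (induction k) auto

lemma wt_rep_E: "wt_from i (replicate k E) = 0"
  by (induction k arbitrary: i) auto

lemma D_rec: "D (Suc m) (Suc n) = (\<lambda>p. p@[E]) ` D m (Suc n) \<union> (\<lambda>p. p@[N]) ` D (Suc m) n
   \<union> (\<lambda>p. p@[NE]) ` D m n"
proof (intro equalityI subsetI)
  fix p assume p: "p \<in> D (Suc m) (Suc n)"
  then have "p \<noteq> []" by (auto simp: D_def)
  then obtain r x where px: "p = r @ [x]" by (metis append_butlast_last_id)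
  show "p \<in> (\<lambda>p. p@[E]) ` D m (Suc n) \<union> (\<lambda>p. p@[N]) ` D (Suc m) n
   \<union> (\<lambda>p. p@[NE]) ` D m n"
  proof (cases x)
    case E then have "r \<in> D m (Suc n)" using p px by (auto simp: D_def)
    then show ?thesis using px E by blast
  next
    case N then have "r \<in> D (Suc m) n" using p px by (auto simp: D_def)
    then show ?thesis using px N by blast
  next
    case NE then have "r \<in> D m n" using p px by (auto simp: D_def)
    then show ?thesis using px NE by blast
  qed
qed (auto simp: D_def)

definition S :: "nat \<Rightarrow> nat \<Rightarrow> 'a::comm_semiring_1 \<Rightarrow> 'a \<Rightarrow> 'a" where
  "S m n q t = (\<Sum>p\<in>D m n. t ^ d p * q ^ wt p)"

lemma S_0: "S 0 n q t = 1"
  by (simp add: S_def D_0 d_def count_rep wt_def wt_rep_N)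

lemma S_n0: "S m 0 q t = 1"
  by (simp add: S_def D_n0 d_def count_rep wt_def wt_rep_E)

lemma S_rec: "S (Suc m) (Suc n) q t = S m (Suc n) q t
   + q ^ Suc m * S (Suc m) n q t + t * q ^ Suc m * S m n q t"
proof -
  let ?g = "\<lambda>p. t ^ d p * q ^ wt p"
  have inj: "inj (\<lambda>p. p @ [x])" for x :: step by (rule injI) simp
  have d1: "(\<lambda>p. p@[E]) ` D m (Suc n) \<inter> (\<lambda>p. p@[N]) ` D (Suc m) n = {}" by auto
  have d2: "((\<lambda>p. p@[E]) ` D m (Suc n) \<union> (\<lambda>p. p@[N]) ` D (Suc m) n)
     \<inter> (\<lambda>p. p@[NE]) ` D m n = {}" by auto
  have "S (Suc m) (Suc n) q t = sum ?g ((\<lambda>p. p@[E]) ` D m (Suc n))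
     + sum ?g ((\<lambda>p. p@[N]) ` D (Suc m) n) + sum ?g ((\<lambda>p. p@[NE]) ` D m n)"
    unfolding S_def D_rec by (simp add: sum.union_disjoint finite_D d1 d2)
  also have "sum ?g ((\<lambda>p. p@[E]) ` D m (Suc n)) = S m (Suc n) q t"
    by (simp add: sum.reindex inj[THEN inj_on_subset] S_def d_def wt_def wt_from_snoc)
  also have "sum ?g ((\<lambda>p. p@[N]) ` D (Suc m) n) = q ^ Suc m * S (Suc m) n q t"
    unfolding S_def sum_distrib_left
    by (subst sum.reindex, rule inj[THEN inj_on_subset], simp,
        rule sum.cong, simp, auto simp: d_def wt_def wt_from_snoc D_def power_add mult_ac)
  also have "sum ?g ((\<lambda>p. p@[NE]) ` D m n) = t * q ^ Suc m * S m n q t"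
    unfolding S_def sum_distrib_left
    by (subst sum.reindex, rule inj[THEN inj_on_subset], simp,
        rule sum.cong, simp, auto simp: d_def wt_def wt_from_snoc D_def power_add mult_ac)
  finally show ?thesis .
qed

lemma main: "over_gbinom m n q t = S m n q t"
proof (induction m arbitrary: n)
  case 0 then show ?case by (simp add: og_0 S_0)
next
  case (Suc m) note IH = this
  show ?case
  proof (induction n)
    case 0 then show ?case by (simp add: og_n0 S_n0)
  next
    case (Suc n) then show ?case by (simp add: og_rec S_rec IH)
  qed
qed

theorem proposition2p1:
  fixes m n :: nat and q t :: "'a::comm_semiring_1"
  shows "over_gbinom m n q t = (\<Sum>p\<in>D m n. t ^ d p * q ^ wt p)"
  using main unfolding S_def .

end
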